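(* For every constant $\varepsilon>0$ there exists an online algorithm for $\textsc{Online-Sorting}[1+\varepsilon,n]$ with competitive ratio $2^{O(\sqrt{\log n\,\log\log n})}$, i.e., whose cost on every stream of $n$ reals in $[0,1]$ is at most $2^{O(\sqrt{\log n\log\log n})}$.
   Context: $\textsc{Online-Sorting}[\gamma,n]$ (for $\gamma\ge 1$): there is an array $A$ consisting of $\gamma n$ initially empty cells, ordered from left to right. A stream of $n$ reals $s_1,\dots,s_n\in[0,1]$ arrives one at a time. An online algorithm must place each $s_i$ into an empty cell of $A$, irrevocably, before $s_{i+1}$ is revealed. After all reals are placed, let $r_1,\dots,r_n$ be the reals in left-to-right order in $A$, with $r_0:=0$, $r_{n+1}:=1$; the cost is $\sum_{i=0}^{n}|r_{i+1}-r_i|$. The offline optimum has cost exactly $1$, so an algorithm has competitive ratio $\Delta$ if its cost is at most $\Delta$ on every stream of $n$ reals. *)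

theory Defs
  imports Complex_Main
begin

text \<open>A deterministic online algorithm for Online-Sorting is modelled as a function
  that, given the prefix s_1,...,s_i of the stream seen so far (with s_i the current real),
  returns the index of the cell into which s_i is placed.  Since the algorithm is
  deterministic, the current state of the array is a function of the earlier prefix,
  so this captures every deterministic online algorithm.\<close>

type_synonym online_alg = "real list \<Rightarrow> nat"

definition placement :: "online_alg \<Rightarrow> real list \<Rightarrow> nat list" where
  "placement A s = map (\<lambda>i. A (take (Suc i) s)) [0..<length s]"

definition valid_run :: "nat \<Rightarrow> online_alg \<Rightarrow> real list \<Rightarrow> bool" where
  "valid_run m A s \<longleftrightarrow> distinct (placement A s) \<and> (\<forall>p\<in>set (placement A s). p < m)"

definition arrangement :: "online_alg \<Rightarrow> real list \<Rightarrow> real list" where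
  "arrangement A s = map snd (sort_key fst (zip (placement A s) s))"

definition path_cost :: "real list \<Rightarrow> real" where
  "path_cost r = (let ys = 0 # r @ [1] in (\<Sum>i<length ys - 1. \<bar>ys ! Suc i - ys ! i\<bar>))"

definition sort_cost :: "online_alg \<Rightarrow> real list \<Rightarrow> real" where
  "sort_cost A s = path_cost (arrangement A s)"

end

theory Submission
  imports Defs "HOL-Real_Asymp.Real_Asymp"
begin

definition cnt :: "(nat \<Rightarrow> 'a) \<Rightarrow> 'a \<Rightarrow> nat \<Rightarrow> nat" where
  "cnt f v i = card {j. j < i \<and> f j = v}"

definition fo :: "(nat \<Rightarrow> 'a) \<Rightarrow> nat \<Rightarrow> nat" where
  "fo f i = (LEAST j. f j = f i)"

definition slot :: "(nat \<Rightarrow> 'a) \<Rightarrow> nat \<Rightarrow> nat" where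
  "slot f i = card (f ` {..<fo f i})"

lemma fo_le: "fo f i \<le> i"
  unfolding fo_def by (rule Least_le) simp

lemma fo_eq: "f (fo f i) = f i"
  unfolding fo_def by (rule LeastI[where k=i]) simp

lemma fo_min: "j < fo f i \<Longrightarrow> f j \<noteq> f i"
  unfolding fo_def using not_less_Least by blast

lemma fo_cong:
  assumes "\<And>j. j \<le> i \<Longrightarrow> f j = g j"
  shows "fo f i = fo g i"
proof -
  have a: "g (fo f i) = g i" using fo_eq[of f i] fo_le[of f i] assms by (metis le_refl)
  have b: "f (fo g i) = f i" using fo_eq[of g i] fo_le[of g i] assms by (metis le_refl)
  have "fo g i \<le> fo f i" unfolding fo_def[of g] using a by (rule Least_le)
  moreover have "fo f i \<le> fo g i" unfolding fo_def[of f] using b by (rule Least_le)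
  ultimately show ?thesis by simp
qed

lemma slot_cong:
  assumes "\<And>j. j \<le> i \<Longrightarrow> f j = g j"
  shows "slot f i = slot g i"
proof -
  have "fo f i = fo g i" by (rule fo_cong) (use assms in auto)
  moreover have "f ` {..<fo f i} = g ` {..<fo f i}"
    using assms fo_le[of f i] by (intro image_cong) auto
  ultimately show ?thesis unfolding slot_def by simp
qed

lemma fo_same: "f i = f j \<Longrightarrow> fo f i = fo f j"
  unfolding fo_def by simp

lemma slot_inj:
  assumes "slot f i = slot f j" shows "f i = f j"
proof (rule ccontr)
  assume ne: "f i \<noteq> f j"
  have ne2: "fo f i \<noteq> fo f j" using fo_eq[of f i] fo_eq[of f j] ne by metis
  have key: "slot f a < slot f b" if "fo f a < fo f b" for a b
  proof -
    have sub: "f ` {..<fo f a} \<subseteq> f ` {..<fo f b}" using that by auto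
    have "f a \<in> f ` {..<fo f b}" using that fo_eq[of f a] by (metis image_eqI lessThan_iff)
    moreover have "f a \<notin> f ` {..<fo f a}"
    proof
      assume "f a \<in> f ` {..<fo f a}"
      then obtain j where "j < fo f a" "f j = f a" by auto
      with fo_min show False by blast
    qed
    ultimately have "f ` {..<fo f a} \<subset> f ` {..<fo f b}" using sub by blast
    then show ?thesis unfolding slot_def by (intro psubset_card_mono) auto
  qed
  show False using ne2 key[of i j] key[of j i] assms by linarith
qed

lemma slot_same: "f i = f j \<Longrightarrow> slot f i = slot f j"
  unfolding slot_def using fo_same by metis

lemma slot_less:
  assumes "i < n" shows "slot f i < card (f ` {..<n})"
proof -
  have sub: "f ` {..<fo f i} \<subseteq> f ` {..<n}" using fo_le[of f i] assms by auto
  have "f i \<in> f ` {..<n}" using assms by auto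
  moreover have "f i \<notin> f ` {..<fo f i}"
  proof
    assume "f i \<in> f ` {..<fo f i}"
    then obtain j where "j < fo f i" "f j = f i" by auto
    with fo_min show False by blast
  qed
  ultimately have "f ` {..<fo f i} \<subset> f ` {..<n}" using sub by blast
  then show ?thesis unfolding slot_def by (intro psubset_card_mono) auto
qed

lemma cnt_cong: "(\<And>j. j < i \<Longrightarrow> f j = g j) \<Longrightarrow> cnt f v i = cnt g v i"
  unfolding cnt_def by (metis (mono_tags, lifting))

lemma cnt_less:
  assumes "(i::nat) < j" "P i" shows "card {l. l < i \<and> P l} < card {l. l < j \<and> P l}"
proof -
  have "{l. l < i \<and> P l} \<subset> {l. l < j \<and> P l}" using assms by (auto intro: less_trans)
  moreover have "finite {l. l < j \<and> P l}" by (rule finite_subset[of _ "{..<j}"]) auto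
  ultimately show ?thesis by (intro psubset_card_mono)
qed

lemma length_filter_upt: "length (filter P [0..<n]) = card {j. j < n \<and> P j}"
proof -
  have "{i. i < n \<and> P ([0..<n] ! i)} = {j. j < n \<and> P j}" by auto
  then show ?thesis by (simp add: length_filter_conv_card)
qed

lemma filter_upt_nth:
  assumes "P i" "i < n"
  shows "card {j. j < i \<and> P j} < length (filter P [0..<n]) \<and> filter P [0..<n] ! card {j. j < i \<and> P j} = i"
  using assms
proof (induction n)
  case 0 then show ?case by simp
next
  case (Suc n)
  have len: "length (filter P [0..<m]) = card {j. j < m \<and> P j}" for m
    by (rule length_filter_upt)
  let ?c = "card {j. j < i \<and> P j}"
  have eq: "filter P [0..<Suc n] = filter P [0..<n] @ (if P n then [n] else [])" by simp
  show ?case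
  proof (cases "i < n")
    case True
    then have ih: "?c < length (filter P [0..<n])" "filter P [0..<n] ! ?c = i" using Suc by blast+
    then show ?thesis unfolding eq by (simp add: nth_append)
  next
    case False
    then have "i = n" using Suc by simp
    then have "?c = length (filter P [0..<n])" using len[of n] by simp
    then show ?thesis unfolding eq using \<open>i = n\<close> Suc.prems by (simp add: nth_append)
  qed
qed

definition key :: "nat \<Rightarrow> nat \<Rightarrow> real \<Rightarrow> int" where
  "key k l x = \<lfloor>x * real k ^ Suc l\<rfloor>"

definition lab :: "nat \<Rightarrow> nat \<Rightarrow> nat \<Rightarrow> real list \<Rightarrow> nat \<Rightarrow> int \<times> nat" where
  "lab k l cap xs i = (key k l (xs!i), cnt (\<lambda>j. key k l (xs!j)) (key k l (xs!i)) i div cap)"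

primrec posf :: "nat \<Rightarrow> nat \<Rightarrow> nat \<Rightarrow> nat \<Rightarrow> nat \<Rightarrow> real list \<Rightarrow> nat \<Rightarrow> nat" where
  "posf t k T 0 l xs i = 0"
| "posf t k T (Suc r) l xs i =
     (let f = lab k l (T^r) xs; idx = filter (\<lambda>j. f j = f i) [0..<length xs]
      in slot f i * t^r + posf t k T r (Suc l) (map ((!) xs) idx) (cnt f (f i) i))"

lemma lab_take: "j < m \<Longrightarrow> lab k l cap (take m xs) j = lab k l cap xs j"
proof -
  assume jm: "j < m"
  have "cnt (\<lambda>j. key k l (take m xs ! j)) v j = cnt (\<lambda>j. key k l (xs ! j)) v j" for v
    by (rule cnt_cong) (use jm in simp)
  then show ?thesis unfolding lab_def using jm by simp
qed

lemma posf_take: "i < m \<Longrightarrow> m \<le> length xs \<Longrightarrow> posf t k T r l (take m xs) i = posf t k T r l xs i"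
proof (induction r arbitrary: l xs i m)
  case 0 then show ?case by simp
next
  case (Suc r)
  define f where "f = lab k l (T^r) xs"
  define f' where "f' = lab k l (T^r) (take m xs)"
  have ff: "f' j = f j" if "j < m" for j unfolding f_def f'_def using that by (rule lab_take)
  have sl: "slot f' i = slot f i" by (rule slot_cong) (use ff Suc.prems in auto)
  have fi: "f' i = f i" using ff Suc.prems by simp
  have cn: "cnt f' (f i) i = cnt f (f i) i" by (rule cnt_cong) (use ff Suc.prems in auto)
  define idx' where "idx' = filter (\<lambda>j. f j = f i) [0..<m]"
  have idx'eq: "filter (\<lambda>j. f' j = f' i) [0..<length (take m xs)] = idx'"
    unfolding idx'_def using Suc.prems fi ff by (auto intro!: filter_cong simp: min_def)
  have mapeq: "map ((!) (take m xs)) idx' = map ((!) xs) idx'"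
    unfolding idx'_def by (auto intro!: map_cong)
  have upt: "[0..<length xs] = [0..<m] @ [m..<length xs]"
    using Suc.prems upt_add_eq_append[of 0 m "length xs - m"] by simp
  define sub where "sub = map ((!) xs) (filter (\<lambda>j. f j = f i) [0..<length xs])"
  have subeq: "map ((!) xs) idx' = take (length idx') sub"
    unfolding sub_def idx'_def upt by simp
  have cl: "cnt f (f i) i < length idx'"
    unfolding idx'_def cnt_def using filter_upt_nth[of "\<lambda>j. f j = f i" i m] Suc.prems by simp
  have ls: "length idx' \<le> length sub" unfolding sub_def idx'_def upt by simp
  have "posf t k T (Suc r) l (take m xs) i =
        slot f' i * t^r + posf t k T r (Suc l) (map ((!) (take m xs)) (filter (\<lambda>j. f' j = f' i) [0..<length (take m xs)])) (cnt f' (f' i) i)"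
    by (simp add: f'_def Let_def)
  also have "\<dots> = slot f i * t^r + posf t k T r (Suc l) (take (length idx') sub) (cnt f (f i) i)"
    using sl idx'eq mapeq subeq fi cn by simp
  also have "\<dots> = slot f i * t^r + posf t k T r (Suc l) sub (cnt f (f i) i)"
    using Suc.IH[OF cl ls] by simp
  also have "\<dots> = posf t k T (Suc r) l xs i"
    by (simp add: f_def sub_def Let_def)
  finally show ?case .
qed

lemma interval_diff:
  fixes x y K :: real and a :: int
  assumes "K > 0" "a / K \<le> x" "x \<le> (real_of_int a + 1) / K" "a / K \<le> y" "y \<le> (real_of_int a + 1) / K"
  shows "\<bar>x - y\<bar> \<le> 1 / K"
proof -
  have "(real_of_int a + 1) / K - a / K = 1 / K" using assms(1) by (simp add: field_simps)
  then show ?thesis using assms by linarith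
qed

lemma key_range:
  fixes x :: real and a :: int
  assumes k1: "k \<ge> 1" and "a / real k ^ l \<le> x" "x \<le> (real_of_int a + 1) / real k ^ l"
  shows "a * int k \<le> key k l x \<and> key k l x \<le> a * int k + int k"
proof -
  have kp: "real k ^ l > 0" using k1 by simp
  have "a \<le> x * real k ^ l" using assms(2) kp by (simp add: pos_divide_le_eq)
  then have lo: "real_of_int (a * int k) \<le> x * real k ^ Suc l"
    using k1 by (simp add: mult.assoc[symmetric] mult_right_mono mult.commute)
  have "x * real k ^ l \<le> a + 1" using assms(3) kp by (simp add: pos_le_divide_eq)
  then have "x * real k ^ l * real k \<le> (a + 1) * real k"
    by (rule mult_right_mono) auto
  then have hi: "x * real k ^ Suc l \<le> real_of_int (a * int k + int k)"
    by (simp add: algebra_simps)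
  have "a * int k \<le> key k l x" unfolding key_def using lo by (simp add: le_floor_iff)
  moreover have "key k l x \<le> a * int k + int k" unfolding key_def using hi
    by (metis floor_mono floor_of_int)
  ultimately show ?thesis by simp
qed

lemma key_interval:
  assumes k1: "k \<ge> 1" and "key k l x = b"
  shows "real_of_int b / real k ^ Suc l \<le> x \<and> x \<le> (real_of_int b + 1) / real k ^ Suc l"
proof -
  have kp: "real k ^ Suc l > 0" using k1 by simp
  have "real_of_int b \<le> x * real k ^ Suc l" "x * real k ^ Suc l < real_of_int b + 1"
    using assms(2) unfolding key_def by linarith+
  then show ?thesis using kp by (simp add: pos_divide_le_eq pos_le_divide_eq)
qed

lemma divmod_unique:
  fixes a b c d B :: nat
  assumes "a * B + b = c * B + d" "b < B" "d < B"
  shows "a = c \<and> b = d"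
proof -
  have "(a * B + b) div B = a" using assms(2) by simp
  moreover have "(c * B + d) div B = c" using assms(3) by simp
  ultimately have "a = c" using assms(1) by simp
  then show ?thesis using assms(1) by simp
qed

lemma div_bound:
  fixes x g cap :: nat
  assumes "x div cap = g" "cap > 0"
  shows "g * cap \<le> x \<and> x < g * cap + cap"
proof -
  have "x = x div cap * cap + x mod cap" by simp
  moreover have "x mod cap < cap" using assms(2) by simp
  ultimately show ?thesis using assms(1) by (metis add_less_cancel_left le_add1)
qed

lemma card_group:
  fixes kf :: "nat \<Rightarrow> int" and cap n i :: nat
  assumes cap: "cap > 0"
  shows "card {j. j < n \<and> (kf j, cnt kf (kf j) j div cap) = (kf i, cnt kf (kf i) i div cap)} \<le> cap"
proof -
  define S where "S = {j. j < n \<and> (kf j, cnt kf (kf j) j div cap) = (kf i, cnt kf (kf i) i div cap)}"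
  define q where "q = cnt kf (kf i) i div cap"
  define g where "g j = cnt kf (kf i) j" for j
  have inS: "kf j = kf i \<and> g j div cap = q" if "j \<in> S" for j
    using that unfolding S_def g_def q_def by auto
  have "inj_on g S"
  proof (rule inj_onI)
    fix x y assume xy: "x \<in> S" "y \<in> S" "g x = g y"
    show "x = y"
    proof (rule ccontr)
      assume "x \<noteq> y"
      then consider "x < y" | "y < x" by linarith
      then show False
      proof cases
        case 1
        have "g x < g y" unfolding g_def cnt_def
          by (rule cnt_less[OF 1]) (use inS[OF xy(1)] in simp)
        then show False using xy by simp
      next
        case 2
        have "g y < g x" unfolding g_def cnt_def
          by (rule cnt_less[OF 2]) (use inS[OF xy(2)] in simp)
        then show False using xy by simp
      qed
    qed
  qed
  moreover have "g ` S \<subseteq> {q * cap..<q * cap + cap}"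
    using inS div_bound[OF _ cap] by fastforce
  ultimately have "card S \<le> card {q * cap..<q * cap + cap}"
    by (intro card_inj_on_le) auto
  then show ?thesis unfolding S_def by simp
qed

lemma div_mult_le_self: "(x::nat) div c * c \<le> x"
  by (metis div_mult_mod_eq le_add1)

lemma card_labels:
  fixes kf :: "nat \<Rightarrow> int" and cap n T k :: nat and a :: int
  assumes cap: "cap > 0" and n: "n \<le> T * cap"
    and kr: "\<forall>j<n. a * int k \<le> kf j \<and> kf j \<le> a * int k + int k"
  shows "card ((\<lambda>j. (kf j, cnt kf (kf j) j div cap)) ` {..<n}) \<le> T + k + 1"
proof -
  define F where "F = (\<lambda>j. (kf j, cnt kf (kf j) j div cap)) ` {..<n}"
  define K where "K = kf ` {..<n}"
  define S where "S b = {j. j < n \<and> kf j = b}" for b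
  define c where "c b = card (S b)" for b
  have finK: "finite K" unfolding K_def by simp
  have finS: "finite (S b)" for b unfolding S_def by simp
  have "F \<subseteq> (\<Union>b\<in>K. (\<lambda>j. (b, cnt kf b j div cap)) ` S b)"
    unfolding F_def K_def S_def by force
  then have "card F \<le> card (\<Union>b\<in>K. (\<lambda>j. (b, cnt kf b j div cap)) ` S b)"
    by (intro card_mono) (auto simp: finK finS)
  also have "\<dots> \<le> (\<Sum>b\<in>K. card ((\<lambda>j. (b, cnt kf b j div cap)) ` S b))"
    by (rule card_UN_le[OF finK])
  also have "\<dots> \<le> (\<Sum>b\<in>K. (c b - 1) div cap + 1)"
  proof (rule sum_mono)
    fix b assume "b \<in> K"
    have "(\<lambda>j. (b, cnt kf b j div cap)) ` S b \<subseteq> (\<lambda>g. (b, g)) ` {..(c b - 1) div cap}"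
    proof
      fix z assume "z \<in> (\<lambda>j. (b, cnt kf b j div cap)) ` S b"
      then obtain j where j: "j \<in> S b" "z = (b, cnt kf b j div cap)" by auto
      have "cnt kf b j < c b" unfolding cnt_def c_def S_def
        by (rule cnt_less) (use j(1) in \<open>auto simp: S_def\<close>)
      then have "cnt kf b j div cap \<le> (c b - 1) div cap" by (intro div_le_mono) simp
      then show "z \<in> (\<lambda>g. (b, g)) ` {..(c b - 1) div cap}" using j by auto
    qed
    then have "card ((\<lambda>j. (b, cnt kf b j div cap)) ` S b) \<le> card ((\<lambda>g. (b, g)) ` {..(c b - 1) div cap})"
      by (intro card_mono) auto
    also have "\<dots> \<le> card {..(c b - 1) div cap}" by (rule card_image_le) simp
    finally show "card ((\<lambda>j. (b, cnt kf b j div cap)) ` S b) \<le> (c b - 1) div cap + 1" by simp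
  qed
  finally have cF: "card F \<le> (\<Sum>b\<in>K. (c b - 1) div cap + 1)" .
  have "cap * card F \<le> cap * (\<Sum>b\<in>K. (c b - 1) div cap + 1)" using cF by simp
  also have "\<dots> = (\<Sum>b\<in>K. ((c b - 1) div cap) * cap + cap)" by (simp add: sum_distrib_left algebra_simps)
  also have "\<dots> \<le> (\<Sum>b\<in>K. c b + cap)"
  proof (rule sum_mono)
    fix b
    have "(c b - 1) div cap * cap \<le> c b - 1" by (rule div_mult_le_self)
    then show "(c b - 1) div cap * cap + cap \<le> c b + cap" by linarith
  qed
  also have "\<dots> = (\<Sum>b\<in>K. c b) + card K * cap" by (simp add: sum.distrib)
  also have "(\<Sum>b\<in>K. c b) = n"
  proof -
    have "(\<Union>b\<in>K. S b) = {..<n}" unfolding K_def S_def by auto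
    moreover have "card (\<Union>b\<in>K. S b) = (\<Sum>b\<in>K. card (S b))"
      by (rule card_UN_disjoint[OF finK]) (auto simp: finS S_def)
    ultimately show ?thesis unfolding c_def by simp
  qed
  also have "card K \<le> k + 1"
  proof -
    have "K \<subseteq> {a * int k..a * int k + int k}" unfolding K_def using kr by auto
    then have "card K \<le> card {a * int k..a * int k + int k}" by (intro card_mono) auto
    then show ?thesis by simp
  qed
  then have "card K * cap \<le> (k + 1) * cap" by (rule mult_le_mono1)
  then have "n + card K * cap \<le> n + (k + 1) * cap" by simp
  finally have "cap * card F \<le> T * cap + (k + 1) * cap" using n by linarith
  then have "card F * cap \<le> (T + k + 1) * cap" by (simp add: algebra_simps)
  then have "card F \<le> T + k + 1" using cap mult_le_cancel2 by blast
  then show ?thesis unfolding F_def .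
qed

lemma main:
  fixes xs :: "real list" and a :: int
  assumes k1: "k \<ge> 1" and T1: "T \<ge> 1" and tdef: "t = T + k + 1"
  shows "length xs \<le> T^r \<Longrightarrow> (\<forall>x\<in>set xs. a / real k ^ l \<le> x \<and> x \<le> (real_of_int a + 1) / real k ^ l) \<Longrightarrow>
    (\<forall>i<length xs. posf t k T r l xs i < t^r) \<and> inj_on (posf t k T r l xs) {..<length xs} \<and>
    (\<forall>i<length xs. \<forall>j<length xs. \<forall>l'\<le>r. posf t k T r l xs i div t^(r-l') = posf t k T r l xs j div t^(r-l')
        \<longrightarrow> \<bar>xs!i - xs!j\<bar> \<le> 1 / real k ^ (l+l'))"
proof (induction r arbitrary: l xs a)
  case 0
  have len: "length xs \<le> 1" using 0 by simp
  have kp: "real k ^ l > 0" using k1 by simp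
  have A: "inj_on (\<lambda>_::nat. 0::nat) {..<length xs}" using len by (auto simp: inj_on_def)
  have B: "\<bar>xs!i - xs!j\<bar> \<le> 1 / real k ^ (l+l')"
    if "i < length xs" "j < length xs" "l' \<le> 0" for i j l'
  proof -
    have "xs!i \<in> set xs" "xs!j \<in> set xs" using that by auto
    then show ?thesis using that 0(2) interval_diff[OF kp, of a "xs!i" "xs!j"] by auto
  qed
  show ?case using A B by simp
next
  case (Suc r)
  define n where "n = length xs"
  define cap where "cap = T^r"
  define kf where "kf j = key k l (xs!j)" for j
  define f where "f = lab k l cap xs"
  have fdef: "f = (\<lambda>j. (kf j, cnt kf (kf j) j div cap))"
    unfolding f_def kf_def lab_def by (simp add: fun_eq_iff)
  define idx where "idx i = filter (\<lambda>j. f j = f i) [0..<n]" for i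
  define sub where "sub i = map ((!) xs) (idx i)" for i
  define c where "c i = cnt f (f i) i" for i
  define p where "p i = posf t k T r (Suc l) (sub i) (c i)" for i
  have pos: "posf t k T (Suc r) l xs i = slot f i * t^r + p i" for i
    by (simp add: Let_def f_def sub_def idx_def c_def p_def n_def cap_def)
  have cap: "cap > 0" unfolding cap_def using T1 by simp
  have tpos: "t > 0" using tdef by simp
  have kr: "\<forall>j<n. a * int k \<le> kf j \<and> kf j \<le> a * int k + int k"
  proof (intro allI impI)
    fix j assume "j < n"
    then have "xs!j \<in> set xs" unfolding n_def by simp
    then show "a * int k \<le> kf j \<and> kf j \<le> a * int k + int k"
      unfolding kf_def using key_range[OF k1] Suc.prems(2) by blast
  qed
  have nle: "n \<le> T * cap" using Suc.prems(1) unfolding n_def cap_def by simp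
  have cardf: "card (f ` {..<n}) \<le> t"
    unfolding fdef tdef using card_labels[OF cap nle kr] .
  have slt: "slot f i < t" if "i < n" for i
    using slot_less[OF that, of f] cardf by linarith
  have nth: "c i < length (sub i) \<and> sub i ! c i = xs ! i" if "i < n" for i
    using filter_upt_nth[of "\<lambda>j. f j = f i" i n] that
    unfolding c_def cnt_def sub_def idx_def by simp
  have lensub: "length (sub i) \<le> T^r" if "i < n" for i
  proof -
    have "length (sub i) = card {j. j < n \<and> f j = f i}"
      unfolding sub_def idx_def by (simp add: length_filter_upt)
    also have "\<dots> \<le> cap" unfolding fdef by (rule card_group[OF cap])
    finally show ?thesis unfolding cap_def .
  qed
  have intv: "\<forall>x\<in>set (sub i). real_of_int (kf i) / real k ^ Suc l \<le> x \<and> x \<le> (real_of_int (kf i) + 1) / real k ^ Suc l"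
    for i
  proof
    fix x assume "x \<in> set (sub i)"
    then obtain j where j: "j \<in> set (idx i)" "x = xs ! j" unfolding sub_def by auto
    then have "f j = f i" unfolding idx_def by simp
    then have "kf j = kf i" unfolding fdef by simp
    then have "key k l x = kf i" using j unfolding kf_def by simp
    then show "real_of_int (kf i) / real k ^ Suc l \<le> x \<and> x \<le> (real_of_int (kf i) + 1) / real k ^ Suc l"
      by (rule key_interval[OF k1])
  qed
  have IH: "(\<forall>i'<length (sub i). posf t k T r (Suc l) (sub i) i' < t^r) \<and> inj_on (posf t k T r (Suc l) (sub i)) {..<length (sub i)} \<and>
    (\<forall>i'<length (sub i). \<forall>j'<length (sub i). \<forall>l'\<le>r. posf t k T r (Suc l) (sub i) i' div t^(r-l') = posf t k T r (Suc l) (sub i) j' div t^(r-l')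
        \<longrightarrow> \<bar>sub i!i' - sub i!j'\<bar> \<le> 1 / real k ^ (Suc l+l'))" if "i < n" for i
    using Suc.IH[OF lensub[OF that] intv[of i]] .
  have plt: "p i < t^r" if "i < n" for i
    using IH[OF that] nth[OF that] unfolding p_def by blast
  have same: "sub i = sub j" "idx i = idx j" if "f i = f j" for i j
    unfolding sub_def idx_def using that by simp_all
  have cinj: "i = j" if "i < n" "j < n" "f i = f j" "c i = c j" for i j
  proof (rule ccontr)
    assume "i \<noteq> j"
    then consider "i < j" | "j < i" by linarith
    then show False
    proof cases
      case 1
      have "c i < c j" unfolding c_def cnt_def using that(3) by (simp add: cnt_less[OF 1])
      then show False using that by simp
    next
      case 2
      have "c j < c i" unfolding c_def cnt_def using that(3) by (simp add: cnt_less[OF 2])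
      then show False using that by simp
    qed
  qed
  have P1: "\<forall>i<length xs. posf t k T (Suc r) l xs i < t^Suc r"
  proof (intro allI impI)
    fix i assume "i < length xs"
    then have i: "i < n" unfolding n_def .
    have "slot f i + 1 \<le> t" using slt[OF i] by simp
    then have "(slot f i + 1) * t^r \<le> t * t^r" by (rule mult_le_mono1)
    moreover have "slot f i * t^r + p i < (slot f i + 1) * t^r" using plt[OF i] by simp
    ultimately show "posf t k T (Suc r) l xs i < t^Suc r" unfolding pos by simp
  qed
  have P2: "inj_on (posf t k T (Suc r) l xs) {..<length xs}"
  proof (rule inj_onI)
    fix i j assume ij: "i \<in> {..<length xs}" "j \<in> {..<length xs}"
      and eq: "posf t k T (Suc r) l xs i = posf t k T (Suc r) l xs j"
    have i: "i < n" and j: "j < n" using ij unfolding n_def by auto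
    have "slot f i = slot f j \<and> p i = p j"
      by (rule divmod_unique) (use eq pos plt i j in auto)
    then have fij: "f i = f j" and pij: "p i = p j" using slot_inj by auto
    have "c i < length (sub i)" "c j < length (sub i)" using nth[OF i] nth[OF j] same[OF fij] by auto
    then have "c i = c j" using IH[OF i] pij unfolding p_def same[OF fij]
      by (metis inj_on_def lessThan_iff same(1)[OF fij])
    then show "i = j" using cinj[OF i j fij] by simp
  qed
  have P3: "\<bar>xs!i - xs!j\<bar> \<le> 1 / real k ^ (l+l')"
    if i': "i < length xs" and j': "j < length xs" and l': "l' \<le> Suc r"
      and eq: "posf t k T (Suc r) l xs i div t^(Suc r-l') = posf t k T (Suc r) l xs j div t^(Suc r-l')"
    for i j l'
  proof (cases l')
    case 0
    have kp: "real k ^ l > 0" using k1 by simp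
    have "xs!i \<in> set xs" "xs!j \<in> set xs" using i' j' by auto
    then show ?thesis using 0 Suc.prems(2) interval_diff[OF kp, of a "xs!i" "xs!j"] by auto
  next
    case (Suc l'')
    have i: "i < n" and j: "j < n" using i' j' unfolding n_def by auto
    have l'': "l'' \<le> r" using l' Suc by simp
    define B where "B = t^(r - l'')"
    have Bp: "B > 0" unfolding B_def using tpos by simp
    have tr: "t^r = t^l'' * B" unfolding B_def using l'' by (simp add: power_add[symmetric])
    have dv: "posf t k T (Suc r) l xs q div B = slot f q * t^l'' + p q div B" for q
    proof -
      have "posf t k T (Suc r) l xs q = p q + (slot f q * t^l'') * B" unfolding pos tr by (simp add: algebra_simps)
      then show ?thesis using Bp by simp
    qed
    have pd: "p q div B < t^l''" if "q < n" for q
      using plt[OF that] unfolding tr by (simp add: less_mult_imp_div_less)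
    have eq2: "slot f i * t^l'' + p i div B = slot f j * t^l'' + p j div B"
      using eq dv Suc unfolding B_def by simp
    have "slot f i = slot f j \<and> p i div B = p j div B"
      by (rule divmod_unique[OF eq2 pd[OF i] pd[OF j]])
    then have fij: "f i = f j" and pij: "p i div B = p j div B" using slot_inj by auto
    have ci: "c i < length (sub i)" and cj: "c j < length (sub i)" using nth[OF i] nth[OF j] same[OF fij] by auto
    have "\<bar>sub i ! c i - sub i ! c j\<bar> \<le> 1 / real k ^ (Suc l + l'')"
      using IH[OF i] ci cj l'' pij unfolding p_def B_def same(1)[OF fij] by blast
    moreover have "sub i ! c i = xs ! i" "sub i ! c j = xs ! j" using nth[OF i] nth[OF j] same[OF fij] by auto
    ultimately show ?thesis using Suc by simp
  qed
  show ?case using P1 P2 P3 by blast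
qed

fun adj :: "real list \<Rightarrow> real" where
  "adj (x # y # zs) = \<bar>y - x\<bar> + adj (y # zs)"
| "adj _ = 0"

lemma sum_adj: "(\<Sum>i<length ys - 1. \<bar>ys ! Suc i - ys ! i\<bar>) = adj ys"
proof (induction ys rule: adj.induct)
  case (1 x y zs)
  have "(\<Sum>i<length (x # y # zs) - 1. \<bar>(x # y # zs) ! Suc i - (x # y # zs) ! i\<bar>)
      = (\<Sum>i<Suc (length zs). \<bar>(x # y # zs) ! Suc i - (x # y # zs) ! i\<bar>)" by simp
  also have "\<dots> = \<bar>y - x\<bar> + (\<Sum>i<length zs. \<bar>(y # zs) ! Suc i - (y # zs) ! i\<bar>)"
    by (subst sum.lessThan_Suc_shift) simp
  also have "\<dots> = \<bar>y - x\<bar> + adj (y # zs)" using 1 by simp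
  finally show ?case by simp
qed auto

lemma path_cost_adj: "path_cost r = adj (0 # r @ [1])"
  unfolding path_cost_def Let_def by (rule sum_adj)

lemma adj_snoc: "ws \<noteq> [] \<Longrightarrow> adj (ws @ [y]) = adj ws + \<bar>y - last ws\<bar>"
proof (induction ws rule: induct_list012)
  case 1 then show ?case by simp
next
  case (2 x) then show ?case by simp
next
  case (3 x y' zs) then show ?case by simp
qed

lemma ivt_nat: "P 0 \<Longrightarrow> \<not> P d \<Longrightarrow> \<exists>i<d. P i \<and> \<not> P (Suc i)"
proof (induction d)
  case 0 then show ?case by simp
next
  case (Suc d)
  show ?case
  proof (cases "P d")
    case True then show ?thesis using Suc by auto
  next
    case False then show ?thesis using Suc by (meson less_Suc_eq)
  qed
qed

definition blk :: "nat \<Rightarrow> nat \<Rightarrow> nat \<Rightarrow> nat \<times> real \<Rightarrow> nat" where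
  "blk t d l z = fst z div t^(d - Suc l)"

definition Hprop :: "nat \<Rightarrow> nat \<Rightarrow> nat \<Rightarrow> (nat \<times> real) set \<Rightarrow> bool" where
  "Hprop t k d S \<longleftrightarrow> (\<forall>a\<in>S. \<forall>b\<in>S. \<forall>l\<le>d. fst a div t^(d-l) = fst b div t^(d-l) \<longrightarrow> \<bar>snd a - snd b\<bar> \<le> 1 / real k ^ l)"

lemma pair_bound:
  assumes H: "Hprop t k d S" and aS: "a \<in> S" and bS: "b \<in> S"
    and ab: "fst a < fst b" and at: "fst a < t^d" and bt: "fst b < t^d"
  shows "\<bar>snd b - snd a\<bar> \<le> (\<Sum>l<d. (if blk t d l a = blk t d l b then 0 else 1) / real k ^ l)"
proof -
  define Q where "Q l \<longleftrightarrow> fst a div t^(d-l) = fst b div t^(d-l)" for l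
  have "Q 0" unfolding Q_def using at bt by simp
  moreover have "\<not> Q d" unfolding Q_def using ab by simp
  ultimately obtain l0 where l0: "l0 < d" "Q l0" "\<not> Q (Suc l0)" using ivt_nat[of Q d] by blast
  have "\<bar>snd a - snd b\<bar> \<le> 1 / real k ^ l0" using H aS bS l0(1,2) unfolding Hprop_def Q_def by auto
  also have "\<dots> = (if blk t d l0 a = blk t d l0 b then 0 else 1) / real k ^ l0"
    using l0(3) unfolding Q_def blk_def by simp
  also have "\<dots> \<le> (\<Sum>l<d. (if blk t d l a = blk t d l b then 0 else 1) / real k ^ l)"
    by (rule member_le_sum) (use l0(1) in auto)
  finally show ?thesis by (simp add: abs_minus_commute)
qed

lemma blk_mono: "fst a \<le> fst b \<Longrightarrow> blk t d l a \<le> blk t d l b"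
  unfolding blk_def by (rule div_le_mono)

lemma adj_bound:
  assumes "sorted_wrt (\<lambda>a b. fst a < fst b) zs" "zs \<noteq> []" "\<forall>z\<in>set zs. fst z < t^d"
    "Hprop t k d (set zs)"
  shows "adj (map snd zs) \<le> (\<Sum>l<d. (real (card (blk t d l ` set zs)) - 1) / real k ^ l)"
  using assms
proof (induction zs rule: induct_list012)
  case 1 then show ?case by simp
next
  case (2 x) then show ?case by simp
next
  case (3 z z' rest)
  have H': "Hprop t k d (set (z' # rest))" using 3(6) unfolding Hprop_def by auto
  have IH: "adj (map snd (z' # rest)) \<le> (\<Sum>l<d. (real (card (blk t d l ` set (z' # rest))) - 1) / real k ^ l)"
    using 3(2)[OF _ _ _ H'] 3(3,5) by simp
  have zz: "fst z < fst z'" using 3(3) by simp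
  have pb: "\<bar>snd z' - snd z\<bar> \<le> (\<Sum>l<d. (if blk t d l z = blk t d l z' then 0 else 1) / real k ^ l)"
    by (rule pair_bound[OF 3(6)]) (use zz 3(5) in auto)
  have cardeq: "real (card (blk t d l ` set (z # z' # rest))) = (if blk t d l z = blk t d l z' then 0 else 1) + real (card (blk t d l ` set (z' # rest)))" for l
  proof (cases "blk t d l z = blk t d l z'")
    case True
    then have "blk t d l z \<in> blk t d l ` set (z' # rest)" by simp
    then have "blk t d l ` set (z # z' # rest) = blk t d l ` set (z' # rest)"
      by (simp add: insert_absorb)
    then show ?thesis using True by simp
  next
    case False
    have "blk t d l z \<notin> blk t d l ` set (z' # rest)"
    proof
      assume "blk t d l z \<in> blk t d l ` set (z' # rest)"
      then obtain w where w: "w \<in> set (z' # rest)" "blk t d l z = blk t d l w" by (rule imageE) simp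
      have "fst z' \<le> fst w" using w(1) 3(3) by auto
      then have "blk t d l z' \<le> blk t d l w" by (rule blk_mono)
      moreover have "blk t d l z \<le> blk t d l z'" using zz by (intro blk_mono) simp
      ultimately show False using w(2) False by simp
    qed
    then have "card (blk t d l ` set (z # z' # rest)) = Suc (card (blk t d l ` set (z' # rest)))"
      by simp
    then show ?thesis using False by simp
  qed
  have "adj (map snd (z # z' # rest)) = \<bar>snd z' - snd z\<bar> + adj (map snd (z' # rest))" by simp
  also have "\<dots> \<le> (\<Sum>l<d. (if blk t d l z = blk t d l z' then 0 else 1) / real k ^ l) + (\<Sum>l<d. (real (card (blk t d l ` set (z' # rest))) - 1) / real k ^ l)"
    using pb IH by linarith
  also have "\<dots> = (\<Sum>l<d. (if blk t d l z = blk t d l z' then 0 else 1) / real k ^ l + (real (card (blk t d l ` set (z' # rest))) - 1) / real k ^ l)"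
    by (rule sum.distrib[symmetric])
  also have "\<dots> = (\<Sum>l<d. (real (card (blk t d l ` set (z # z' # rest))) - 1) / real k ^ l)"
  proof (rule sum.cong[OF refl])
    fix l
    have e: "real (card (blk t d l ` set (z # z' # rest))) - 1 = (if blk t d l z = blk t d l z' then 0 else 1) + (real (card (blk t d l ` set (z' # rest))) - 1)"
      using cardeq[of l] by linarith
    show "(if blk t d l z = blk t d l z' then 0 else 1) / real k ^ l + (real (card (blk t d l ` set (z' # rest))) - 1) / real k ^ l
        = (real (card (blk t d l ` set (z # z' # rest))) - 1) / real k ^ l"
      unfolding e by (rule add_divide_distrib[symmetric])
  qed
  finally show ?case .
qed

lemma cost_bound:
  assumes srt: "sorted_wrt (\<lambda>a b. fst a < fst b) zs" and rng: "\<forall>z\<in>set zs. fst z < t^d \<and> 0 \<le> snd z \<and> snd z \<le> 1"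
    and H: "Hprop t k d (set zs)" and k1: "k \<ge> 1"
  shows "path_cost (map snd zs) \<le> 2 + (\<Sum>l<d. real t ^ Suc l / real k ^ l)"
proof (cases zs)
  case Nil
  have "0 \<le> (\<Sum>l<d. real t ^ Suc l / real k ^ l)" by (intro sum_nonneg) simp
  then show ?thesis using Nil by (simp add: path_cost_adj)
next
  case (Cons z rest)
  have ne: "zs \<noteq> []" using Cons by simp
  have A: "adj (map snd zs) \<le> (\<Sum>l<d. (real (card (blk t d l ` set zs)) - 1) / real k ^ l)"
    by (rule adj_bound[OF srt ne _ H]) (use rng in auto)
  have B: "(real (card (blk t d l ` set zs)) - 1) / real k ^ l \<le> real t ^ Suc l / real k ^ l" if "l < d" for l
  proof -
    have "blk t d l ` set zs \<subseteq> {..<t^Suc l}"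
    proof
      fix b assume "b \<in> blk t d l ` set zs"
      then obtain w where w: "w \<in> set zs" "b = blk t d l w" by auto
      have "Suc l + (d - Suc l) = d" using that by simp
      then have "t^d = t^Suc l * t^(d - Suc l)" by (metis power_add)
      then have "fst w < t^Suc l * t^(d - Suc l)" using rng w(1) by metis
      then show "b \<in> {..<t^Suc l}" unfolding w(2) blk_def by (simp add: less_mult_imp_div_less)
    qed
    then have "card (blk t d l ` set zs) \<le> card {..<t^Suc l}" by (rule card_mono[OF finite_lessThan])
    then have "card (blk t d l ` set zs) \<le> t^Suc l" by simp
    then have "real (card (blk t d l ` set zs)) \<le> real (t^Suc l)" by (simp only: of_nat_le_iff)
    then have "real (card (blk t d l ` set zs)) - 1 \<le> real t ^ Suc l" by simp
    then show ?thesis using k1 by (intro divide_right_mono) auto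
  qed
  have v: "0 \<le> snd z" "snd z \<le> 1" "0 \<le> last (map snd zs)" "last (map snd zs) \<le> 1"
    using rng Cons by (auto simp: last_map)
  have "path_cost (map snd zs) = \<bar>snd z\<bar> + adj (map snd zs @ [1])"
    unfolding path_cost_adj using Cons by simp
  also have "\<dots> = \<bar>snd z\<bar> + adj (map snd zs) + \<bar>1 - last (map snd zs)\<bar>"
    using adj_snoc[of "map snd zs" 1] ne by simp
  also have "\<dots> \<le> 1 + (\<Sum>l<d. real t ^ Suc l / real k ^ l) + 1"
  proof -
    have S: "(\<Sum>l<d. (real (card (blk t d l ` set zs)) - 1) / real k ^ l) \<le> (\<Sum>l<d. real t ^ Suc l / real k ^ l)"
      by (rule sum_mono) (use B in simp)
    have "\<bar>snd z\<bar> \<le> 1" "\<bar>1 - last (map snd zs)\<bar> \<le> 1" using v by auto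
    then show ?thesis using A S by linarith
  qed
  finally show ?thesis by simp
qed

definition alg :: "nat \<Rightarrow> nat \<Rightarrow> nat \<Rightarrow> nat \<Rightarrow> online_alg" where
  "alg t k T d = (\<lambda>ys. posf t k T d 0 ys (length ys - 1))"

lemma placement_alg: "placement (alg t k T d) s = map (posf t k T d 0 s) [0..<length s]"
  unfolding placement_def alg_def
proof (intro map_cong refl)
  fix i assume "i \<in> set [0..<length s]"
  then have i: "i < length s" by simp
  then have "length (take (Suc i) s) - 1 = i" by simp
  then show "posf t k T d 0 (take (Suc i) s) (length (take (Suc i) s) - 1) = posf t k T d 0 s i"
    using posf_take[of i "Suc i" s] i by simp
qed

lemma algo_props:
  assumes k1: "k \<ge> 1" and T1: "T \<ge> 1" and tdef: "t = T + k + 1"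
    and len: "length s \<le> T^d" and rng: "\<forall>x\<in>set s. 0 \<le> x \<and> x \<le> 1" and tm: "t^d \<le> m"
  shows "valid_run m (alg t k T d) s \<and> sort_cost (alg t k T d) s \<le> 2 + (\<Sum>l<d. real t ^ Suc l / real k ^ l)"
proof -
  define n where "n = length s"
  define P where "P = placement (alg t k T d) s"
  have Peq: "P = map (posf t k T d 0 s) [0..<n]" unfolding P_def n_def by (rule placement_alg)
  have rng': "\<forall>x\<in>set s. real_of_int 0 / real k ^ 0 \<le> x \<and> x \<le> (real_of_int 0 + 1) / real k ^ 0"
    using rng by simp
  have M: "(\<forall>i<length s. posf t k T d 0 s i < t^d) \<and> inj_on (posf t k T d 0 s) {..<length s} \<and>
    (\<forall>i<length s. \<forall>j<length s. \<forall>l'\<le>d. posf t k T d 0 s i div t^(d-l') = posf t k T d 0 s j div t^(d-l')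
        \<longrightarrow> \<bar>s!i - s!j\<bar> \<le> 1 / real k ^ (0+l'))"
    by (rule main[OF k1 T1 tdef len rng'])
  have lenP: "length P = n" unfolding Peq by simp
  have Pnth: "P ! i = posf t k T d 0 s i" if "i < n" for i unfolding Peq using that by simp
  have distP: "distinct P" unfolding Peq using M
    by (simp add: distinct_map atLeast0LessThan n_def)
  have Plt: "\<forall>p\<in>set P. p < t^d" unfolding Peq using M n_def by auto
  have valid: "valid_run m (alg t k T d) s"
    unfolding valid_run_def P_def[symmetric] using distP Plt tm by (meson order_less_le_trans)
  define zs where "zs = sort_key fst (zip P s)"
  have setzs: "set zs = set (zip P s)" unfolding zs_def by simp
  have memz: "\<exists>i<n. z = (P!i, s!i)" if "z \<in> set zs" for z
    using that unfolding setzs by (auto simp: in_set_zip lenP n_def)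
  have sorted: "sorted (map fst zs)" unfolding zs_def by (rule sorted_sort_key)
  have "card (set (map fst zs)) = card (set P)"
    unfolding set_map setzs using lenP n_def by (metis map_fst_zip set_map)
  also have "\<dots> = length (map fst zs)" using distP lenP n_def unfolding zs_def by (simp add: distinct_card)
  finally have "distinct (map fst zs)" by (rule card_distinct)
  then have srt: "sorted_wrt (\<lambda>a b. fst a < fst b) zs"
    using sorted strict_sorted_iff sorted_wrt_map by blast
  have rngz: "\<forall>z\<in>set zs. fst z < t^d \<and> 0 \<le> snd z \<and> snd z \<le> 1"
  proof
    fix z assume "z \<in> set zs"
    then obtain i where i: "i < n" "z = (P!i, s!i)" using memz by blast
    then show "fst z < t^d \<and> 0 \<le> snd z \<and> snd z \<le> 1" using M Pnth rng n_def by auto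
  qed
  have H: "Hprop t k d (set zs)"
    unfolding Hprop_def
  proof (intro ballI allI impI)
    fix a b l assume a: "a \<in> set zs" and b: "b \<in> set zs" and l: "l \<le> d"
      and eq: "fst a div t^(d-l) = fst b div t^(d-l)"
    obtain i where i: "i < n" "a = (P!i, s!i)" using memz a by blast
    obtain j where j: "j < n" "b = (P!j, s!j)" using memz b by blast
    show "\<bar>snd a - snd b\<bar> \<le> 1 / real k ^ l"
      using M i j l eq Pnth n_def by auto
  qed
  have "sort_cost (alg t k T d) s = path_cost (map snd zs)"
    unfolding sort_cost_def arrangement_def zs_def P_def ..
  also have "\<dots> \<le> 2 + (\<Sum>l<d. real t ^ Suc l / real k ^ l)"
    by (rule cost_bound[OF srt rngz H k1])
  finally show ?thesis using valid by simp
qed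

lemma pow_powr2: "(2 powr x) ^ d = 2 powr (x * real d)"
  by (simp add: powr_realpow[symmetric] powr_powr)

lemma params:
  fixes e :: real and n :: nat
  assumes e0: "0 < e" and e1: "e \<le> 1" and n1: "n \<ge> 1"
    and L16: "log 2 n \<ge> 16" and L30: "log 2 n \<ge> 30 / e" and L16e: "log 2 n \<ge> 16 / e + 2"
    and Lsq: "(log 2 n)^2 \<le> 2 powr (sqrt (log 2 n) / 2)" and LL: "log 2 (log 2 n) \<le> log 2 n"
  shows "\<exists>t k T d. k \<ge> 1 \<and> T \<ge> 1 \<and> t = T + k + 1 \<and> n \<le> T^d \<and> real (t^d) \<le> (1 + e) * n \<and>
    2 + (\<Sum>l<d. real t ^ Suc l / real k ^ l) \<le> 2 powr (7 * sqrt (log 2 n * log 2 (log 2 n)))"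
proof -
  define L where "L = log 2 (real n)"
  define A where "A = log 2 L"
  define D where "D = sqrt (L * A)"
  have Lpos: "L > 0" using L16 L_def by simp
  have A4: "A \<ge> 4"
  proof -
    have "log 2 (16::real) = 4"
      using log_powr_cancel[of "2::real" 4] by simp
    moreover have "log 2 (16::real) \<le> log 2 L" using L16 L_def by simp
    ultimately show ?thesis unfolding A_def by simp
  qed
  have AL: "A \<le> L" using LL unfolding A_def L_def .
  have LA0: "0 \<le> L * A" using Lpos A4 by (intro mult_nonneg_nonneg) auto
  have DD: "D * D = L * A" unfolding D_def by (simp only: real_sqrt_mult_self abs_of_nonneg[OF LA0])
  have D0: "D \<ge> 0" unfolding D_def using LA0 by simp
  have D8: "D \<ge> 8"
  proof -
    have "16 * 4 \<le> L * A" using L16 A4 L_def by (intro mult_mono) auto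
    then have "8^2 \<le> L * A" by simp
    then show ?thesis unfolding D_def by (rule real_le_rsqrt)
  qed
  have DsL: "sqrt L \<le> D" unfolding D_def using Lpos A4 by (intro real_sqrt_le_mono) simp
  have DL: "D \<le> L"
  proof -
    have "L * A \<le> L^2" using AL Lpos by (simp add: power2_eq_square)
    then show ?thesis unfolding D_def using Lpos by (intro real_le_lsqrt) auto
  qed
  have nL: "real n = 2 powr L" unfolding L_def using n1 by simp
  have LA: "L = 2 powr A" unfolding A_def using Lpos by simp
  define r0 where "r0 = L / D"
  have Dpos: "D > 0" using D8 by simp
  have r01: "r0 \<ge> 1" unfolding r0_def using DL Dpos by simp
  define d where "d = nat \<lceil>r0\<rceil>"
  have dceil: "real d = of_int \<lceil>r0\<rceil>" unfolding d_def using r01 by simp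
  have dge: "real d \<ge> r0" unfolding dceil by simp
  have dle: "real d \<le> r0 + 1" unfolding dceil by simp
  have d1R: "real d \<ge> 1" using dge r01 by linarith
  then have d1: "d \<ge> 1" by simp
  have dpos: "real d > 0" using d1R by simp
  have d2r: "real d \<le> 2 * r0" using dle r01 by linarith
  have dD: "L \<le> real d * D" using dge unfolding r0_def by (simp add: pos_divide_le_eq[OF Dpos])
  have dD2: "real d * D \<le> 2 * L"
  proof -
    have "real d \<le> (2 * L) / D" using d2r unfolding r0_def by simp
    then show ?thesis by (simp add: pos_le_divide_eq[OF Dpos])
  qed
  have Ad: "A * real d \<le> 2 * D"
  proof -
    have "A * (real d * D) \<le> A * (2 * L)" using dD2 A4 by (intro mult_left_mono) auto
    also have "\<dots> = 2 * (D * D)" using DD by simp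
    finally have "(A * real d) * D \<le> (2 * D) * D" by (simp add: algebra_simps)
    then show ?thesis using Dpos by simp
  qed
  have dL: "real d \<le> L"
  proof -
    have "real d * 8 \<le> real d * D" using D8 by (intro mult_left_mono) auto
    then show ?thesis using dD2 Lpos by linarith
  qed
  have exT: "\<exists>T. n \<le> T^d" using n1 d1 by (intro exI[of _ n] self_le_power) auto
  define T where "T = (LEAST T. n \<le> T^d)"
  have Tn: "n \<le> T^d" unfolding T_def by (rule LeastI_ex[OF exT])
  have T1: "T \<ge> 1"
  proof (rule ccontr)
    assume "\<not> T \<ge> 1" then have "T = 0" by simp
    then show False using Tn n1 d1 by (simp add: zero_power)
  qed
  have Tm: "(T - 1)^d < n"
  proof -
    have "\<not> n \<le> (T - 1)^d"
      by (rule not_less_Least[of "T - 1" "\<lambda>T. n \<le> T^d", folded T_def]) (use T1 in simp)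
    then show ?thesis by simp
  qed
  have TnR: "real n \<le> real T ^ d"
  proof -
    have "real n \<le> real (T^d)" using Tn by (simp only: of_nat_le_iff)
    then show ?thesis by simp
  qed
  have TmR: "(real T - 1) ^ d < real n"
  proof -
    have "real ((T - 1)^d) < real n" using Tm by (simp only: of_nat_less_iff)
    moreover have "real (T - 1) = real T - 1" using T1 by simp
    ultimately show ?thesis by simp
  qed
  have Tlow: "2 powr (D / 2) \<le> real T"
  proof (rule ccontr)
    assume "\<not> 2 powr (D / 2) \<le> real T"
    then have "real T < 2 powr (D / 2)" by simp
    then have "real T ^ d < (2 powr (D / 2)) ^ d" using d1 by (intro power_strict_mono) auto
    also have "\<dots> = 2 powr (D / 2 * real d)" by (rule pow_powr2)
    also have "\<dots> \<le> 2 powr L"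
    proof (rule powr_mono)
      show "D / 2 * real d \<le> L" using dD2 by (simp add: algebra_simps)
    qed simp
    finally show False using TnR nL by linarith
  qed
  have Tup: "real T - 1 < 2 powr D"
  proof (rule ccontr)
    assume "\<not> real T - 1 < 2 powr D"
    then have "2 powr D \<le> real T - 1" by simp
    then have a: "(2 powr D) ^ d \<le> (real T - 1) ^ d" by (intro power_mono) auto
    have b: "(2 powr D) ^ d = 2 powr (D * real d)" by (rule pow_powr2)
    have c: "2 powr L \<le> 2 powr (D * real d)" using dD by (intro powr_mono) (auto simp: mult.commute)
    show False using a b c TmR nL by linarith
  qed
  have big: "8 * real d / e + 2 \<le> 2 powr (D / 2)"
  proof -
    have "8 * real d / e \<le> 8 * L / e" by (intro divide_right_mono) (use dL e0 in auto)
    also have "\<dots> \<le> 16 * L / e" using Lpos e0 by (intro divide_right_mono) auto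
    also have "\<dots> = 16 / e * L" by simp
    finally have a1: "8 * real d / e \<le> 16 / e * L" .
    have a2: "(16 / e + 2) * L = 16 / e * L + 2 * L" by (simp add: algebra_simps)
    have a: "8 * real d / e + 2 \<le> (16 / e + 2) * L" using a1 a2 L16 L_def by linarith
    have "(16 / e + 2) * L \<le> L * L" using L16e Lpos unfolding L_def by (intro mult_right_mono) auto
    also have "\<dots> = L^2" by (simp add: power2_eq_square)
    also have "\<dots> \<le> 2 powr (sqrt L / 2)" using Lsq L_def by simp
    also have "\<dots> \<le> 2 powr (D / 2)" using DsL by (intro powr_mono) auto
    finally show ?thesis using a by linarith
  qed
  have TB: "real T \<ge> 8 * real d / e + 2" using big Tlow by linarith
  define M where "M = nat \<lceil>4 * real d / e\<rceil>"
  have Mx: "4 * real d / e > 0" using dpos e0 by simp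
  have Mceil: "real M = of_int \<lceil>4 * real d / e\<rceil>" unfolding M_def using Mx by simp
  have Mge: "real M \<ge> 4 * real d / e" unfolding Mceil by simp
  have Mle: "real M \<le> 4 * real d / e + 1" unfolding Mceil by simp
  have Mpos: "real M > 0" using Mge Mx by linarith
  have M0: "M > 0" using Mpos by simp
  have T2M: "2 * real M \<le> real T" using Mle TB by linarith
  define k where "k = T div M"
  have kTn: "k \<le> T" unfolding k_def by simp
  have kM: "real k * real M \<le> real T"
  proof -
    have "k * M \<le> T" unfolding k_def by (rule div_mult_le_self)
    then have "real (k * M) \<le> real T" by (simp only: of_nat_le_iff)
    then show ?thesis by simp
  qed
  have kM2: "real T < (real k + 1) * real M"
  proof -
    have "k * M + T mod M = T" unfolding k_def by simp
    moreover have "T mod M < M" using M0 by simp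
    ultimately have "T < k * M + M" by linarith
    then have "real T < real (k * M + M)" by (simp only: of_nat_less_iff)
    then show ?thesis by (simp add: algebra_simps)
  qed
  have kT: "real k \<le> real T / real M" using kM by (simp add: pos_le_divide_eq[OF Mpos])
  have klow: "real k \<ge> real T / (2 * real M)"
  proof -
    have "real T / real M < real k + 1" using kM2 by (simp add: pos_divide_less_eq[OF Mpos])
    moreover have "2 \<le> real T / real M" using T2M by (simp add: pos_le_divide_eq[OF Mpos])
    moreover have "real T / (2 * real M) = (real T / real M) / 2" by simp
    ultimately show ?thesis by linarith
  qed
  have k1: "k \<ge> 1"
  proof -
    have M2: "0 < 2 * real M" using Mpos by simp
    have "1 \<le> real T / (2 * real M)" using T2M by (simp only: pos_le_divide_eq[OF M2] mult_1)
    then have "real k \<ge> 1" using klow by linarith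
    then show ?thesis by simp
  qed
  define t where "t = T + k + 1"
  have kle: "real k \<le> real T * e / (4 * real d)"
  proof -
    have "real T / real M \<le> real T / (4 * real d / e)"
    proof (rule divide_left_mono)
      show "0 < real M * (4 * real d / e)" using Mpos Mx by (rule mult_pos_pos)
    qed (use Mge in auto)
    also have "\<dots> = real T * e / (4 * real d)" by simp
    finally show ?thesis using kT by linarith
  qed
  define y where "y = real T - 1"
  have e8: "8 * real d / e \<ge> 0" using Mx by simp
  have y0: "y > 0" using TB e8 unfolding y_def by linarith
  define q where "q = e / (2 * real d)"
  have q0: "q \<ge> 0" unfolding q_def using e0 by simp
  have tle: "real t \<le> y * (1 + q)"
  proof -
    have yb: "8 * real d / e \<le> y - 1" using TB unfolding y_def by simp
    then have yb2: "8 * real d \<le> (y - 1) * e" using e0 by (simp add: pos_divide_le_eq)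
    have w1: "(y + 1) * e + 8 * real d \<le> 2 * (y * e)" using yb2 by (simp add: algebra_simps)
    have w2: "((y + 1) * e + 8 * real d) / (4 * real d) \<le> (2 * (y * e)) / (4 * real d)"
      using w1 dpos by (intro divide_right_mono) auto
    have w3: "((y + 1) * e + 8 * real d) / (4 * real d) = (y + 1) * e / (4 * real d) + 2"
      using dpos by (simp add: field_simps)
    have w4: "(2 * (y * e)) / (4 * real d) = y * e / (2 * real d)"
      using dpos by (simp add: field_simps)
    have "(y + 1) * e / (4 * real d) + 2 \<le> y * e / (2 * real d)"
      using w2 w3 w4 by simp
    moreover have "real k \<le> (y + 1) * e / (4 * real d)" using kle unfolding y_def by simp
    moreover have "y * q = y * e / (2 * real d)" unfolding q_def by simp
    ultimately have "real k + 2 \<le> y * q" by linarith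
    moreover have "real t = y + real k + 2" unfolding t_def y_def by simp
    ultimately show ?thesis by (simp add: algebra_simps)
  qed
  have qd: "(1 + q) ^ d \<le> 1 + e"
  proof -
    have "(1 + q) ^ d \<le> exp q ^ d" using q0 by (intro power_mono) (auto simp: exp_ge_add_one_self)
    also have "exp q ^ d = exp (real d * q)" by (simp add: exp_of_nat_mult)
    also have "real d * q = e / 2" unfolding q_def using dpos by simp
    also have "exp (e / 2) \<le> 1 + e"
    proof -
      have "norm (exp (e / 2)) \<le> 1 + 2 * norm (e / 2)" using e0 e1 by (intro exp_bound_lemma) simp
      then show ?thesis using e0 by simp
    qed
    finally show ?thesis .
  qed
  have space: "real (t^d) \<le> (1 + e) * real n"
  proof -
    have s1: "real (t^d) \<le> (y * (1 + q)) ^ d" using tle by (simp add: power_mono)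
    have s2: "(y * (1 + q)) ^ d = y ^ d * (1 + q) ^ d" by (simp add: power_mult_distrib)
    have s3: "y ^ d * (1 + q) ^ d \<le> real n * (1 + q) ^ d"
      using TmR q0 unfolding y_def by (intro mult_right_mono) auto
    have s4: "real n * (1 + q) ^ d \<le> real n * (1 + e)" using qd by (intro mult_left_mono) auto
    show ?thesis using s1 s2 s3 s4 by (simp add: mult.commute)
  qed
  define rho where "rho = real t / real k"
  have kpos: "real k > 0" using k1 by simp
  have rho1: "rho \<ge> 1" unfolding rho_def using kpos by (simp add: t_def)
  have t3: "real t \<le> 3 * real T" using kTn T1 unfolding t_def by simp
  have rhoL: "rho \<le> L^2"
  proof -
    have "real T \<le> 2 * real M * real k" using klow Mpos by (simp add: pos_divide_le_eq mult.commute)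
    then have "real t \<le> (6 * real M) * real k" using t3 by simp
    then have r1: "rho \<le> 6 * real M" unfolding rho_def by (simp add: pos_divide_le_eq[OF kpos])
    have r2: "6 * real M \<le> 6 * (4 * real d / e + 1)" using Mle by simp
    have "1 \<le> real d / e" using d1R e1 e0 by (simp add: pos_le_divide_eq)
    then have r3: "6 * (4 * real d / e + 1) \<le> 30 * real d / e" by simp
    have r4: "30 * real d / e \<le> 30 * L / e" by (intro divide_right_mono) (use dL e0 in auto)
    have "30 / e \<le> L" using L30 L_def by simp
    then have "30 / e * L \<le> L * L" using Lpos by (intro mult_right_mono) auto
    then have r5: "30 * L / e \<le> L * L" by simp
    show ?thesis using r1 r2 r3 r4 r5 by (simp add: power2_eq_square)
  qed
  have sumb: "(\<Sum>l<d. real t ^ Suc l / real k ^ l) \<le> real d * (real t * rho ^ d)"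
  proof -
    have "(\<Sum>l<d. real t ^ Suc l / real k ^ l) = (\<Sum>l<d. real t * rho ^ l)"
      unfolding rho_def by (simp add: power_divide)
    also have "\<dots> \<le> (\<Sum>l<d. real t * rho ^ d)"
      using rho1 by (intro sum_mono mult_left_mono power_increasing) auto
    also have "\<dots> = real d * (real t * rho ^ d)" by simp
    finally show ?thesis .
  qed
  have rhod: "rho ^ d \<le> 2 powr (4 * D)"
  proof -
    have h1: "rho ^ d \<le> (L^2) ^ d" using rho1 rhoL by (intro power_mono) auto
    have h2: "L^2 = 2 powr (A * 2)" using pow_powr2[of A 2] LA by simp
    have h3: "(2 powr (A * 2)) ^ d = 2 powr (A * 2 * real d)" by (rule pow_powr2)
    have h4: "2 powr (A * 2 * real d) \<le> 2 powr (4 * D)" using Ad by (intro powr_mono) auto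
    have "rho ^ d \<le> 2 powr (A * 2 * real d)" using h1 h2 h3 by simp
    then show ?thesis using h4 by linarith
  qed
  have tb: "real t \<le> 6 * 2 powr D"
  proof -
    have "1 \<le> 2 powr D" using D0 by (intro ge_one_powr_ge_zero) auto
    then show ?thesis using Tup t3 by linarith
  qed
  have db: "real d \<le> 2 powr D"
  proof -
    have "real d \<le> L" by (rule dL)
    also have "\<dots> \<le> L * L" using L16 L_def by simp
    also have "\<dots> = L^2" by (simp add: power2_eq_square)
    also have "\<dots> \<le> 2 powr (sqrt L / 2)" using Lsq L_def by simp
    also have "\<dots> \<le> 2 powr D" using DsL D0 by (intro powr_mono) auto
    finally show ?thesis .
  qed
  have c1: "2 + (\<Sum>l<d. real t ^ Suc l / real k ^ l) \<le> 2 + real d * (real t * rho ^ d)" using sumb by simp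
  have c2: "real d * (real t * rho ^ d) \<le> 2 powr D * (6 * 2 powr D * 2 powr (4 * D))"
    using db tb rhod rho1 by (intro mult_mono) auto
  have c3a: "2 powr (D + D + 4 * D) = 2 powr D * 2 powr D * 2 powr (4 * D)" by (simp only: powr_add)
  have c3b: "D + D + 4 * D = 6 * D" by simp
  have c3: "2 powr D * (6 * 2 powr D * 2 powr (4 * D)) = 6 * 2 powr (6 * D)"
    using c3a c3b by (simp add: algebra_simps)
  have c4: "1 \<le> 2 powr (6 * D)" using D0 by (intro ge_one_powr_ge_zero) auto
  have c5: "2 powr (6 * D + 3) = 2 powr (6 * D) * 8"
  proof -
    have "2 powr (6 * D + 3) = 2 powr (6 * D) * 2 powr 3" by (simp only: powr_add)
    then show ?thesis by simp
  qed
  have c6: "2 powr (6 * D + 3) \<le> 2 powr (7 * D)" using D8 by (intro powr_mono) auto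
  have cost: "2 + (\<Sum>l<d. real t ^ Suc l / real k ^ l) \<le> 2 powr (7 * D)"
    using c1 c2 c3 c4 c5 c6 by linarith
  show ?thesis
    using k1 T1 t_def Tn space cost unfolding D_def A_def L_def by blast
qed

lemma log_lim: "filterlim (\<lambda>n::nat. log 2 (real n)) at_top at_top"
  by real_asymp

lemma ev_sq: "eventually (\<lambda>L::real. L^2 \<le> 2 powr (sqrt L / 2)) at_top"
  by real_asymp

lemma ev_log: "eventually (\<lambda>L::real. log 2 L \<le> L) at_top"
  by real_asymp

theorem theorem4:
  fixes \<epsilon> :: real
  assumes "\<epsilon> > 0"
  shows "\<exists>C>0. \<exists>N::nat. \<exists>A :: nat \<Rightarrow> online_alg. \<forall>n\<ge>N. \<forall>s :: real list.
           length s = n \<and> (\<forall>x\<in>set s. 0 \<le> x \<and> x \<le> 1) \<longrightarrow>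
             valid_run (nat \<lfloor>(1 + \<epsilon>) * real n\<rfloor>) (A n) s \<and>
             sort_cost (A n) s \<le> 2 powr (C * sqrt (log 2 (real n) * log 2 (log 2 (real n))))"
proof -
  define e where "e = min \<epsilon> 1"
  have e0: "0 < e" and e1: "e \<le> 1" and ee: "e \<le> \<epsilon>" using assms unfolding e_def by auto
  have evL: "eventually (\<lambda>L::real. 16 \<le> L \<and> 30 / e \<le> L \<and> 16 / e + 2 \<le> L \<and>
      L^2 \<le> 2 powr (sqrt L / 2) \<and> log 2 L \<le> L) at_top"
    by (intro eventually_conj eventually_ge_at_top ev_sq ev_log)
  have evn: "eventually (\<lambda>n::nat. 16 \<le> log 2 (real n) \<and> 30 / e \<le> log 2 (real n) \<and> 16 / e + 2 \<le> log 2 (real n) \<and>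
      (log 2 (real n))^2 \<le> 2 powr (sqrt (log 2 (real n)) / 2) \<and> log 2 (log 2 (real n)) \<le> log 2 (real n)) at_top"
    using eventually_compose_filterlim[OF evL log_lim] .
  have ev1: "eventually (\<lambda>n::nat. n \<ge> 1) at_top" by (rule eventually_ge_at_top)
  obtain N where N: "\<And>n. n \<ge> N \<Longrightarrow> n \<ge> 1 \<and> 16 \<le> log 2 (real n) \<and> 30 / e \<le> log 2 (real n) \<and> 16 / e + 2 \<le> log 2 (real n) \<and>
      (log 2 (real n))^2 \<le> 2 powr (sqrt (log 2 (real n)) / 2) \<and> log 2 (log 2 (real n)) \<le> log 2 (real n)"
    using eventually_conj[OF ev1 evn] unfolding eventually_at_top_linorder by blast
  define Q where "Q n = (\<lambda>(t, k, T, d). k \<ge> 1 \<and> T \<ge> 1 \<and> t = T + k + 1 \<and> n \<le> T^d \<and> real (t^d) \<le> (1 + e) * real n \<and>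
    2 + (\<Sum>l<d. real t ^ Suc l / real k ^ l) \<le> 2 powr (7 * sqrt (log 2 (real n) * log 2 (log 2 (real n)))))" for n :: nat
  have ex: "\<forall>n. \<exists>p. N \<le> n \<longrightarrow> Q n p"
  proof
    fix n
    show "\<exists>p. N \<le> n \<longrightarrow> Q n p"
    proof (cases "N \<le> n")
      case True
      then have h: "n \<ge> 1 \<and> 16 \<le> log 2 (real n) \<and> 30 / e \<le> log 2 (real n) \<and> 16 / e + 2 \<le> log 2 (real n) \<and>
        (log 2 (real n))^2 \<le> 2 powr (sqrt (log 2 (real n)) / 2) \<and> log 2 (log 2 (real n)) \<le> log 2 (real n)"
        using N by blast
      obtain t k T d where "k \<ge> 1 \<and> T \<ge> 1 \<and> t = T + k + 1 \<and> n \<le> T^d \<and> real (t^d) \<le> (1 + e) * n \<and>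
        2 + (\<Sum>l<d. real t ^ Suc l / real k ^ l) \<le> 2 powr (7 * sqrt (log 2 n * log 2 (log 2 n)))"
        using params[OF e0 e1] h by blast
      then have "Q n (t, k, T, d)" unfolding Q_def prod.case by blast
      then show ?thesis by blast
    qed simp
  qed
  obtain g where g: "\<And>n. N \<le> n \<Longrightarrow> Q n (g n)" using choice[OF ex] by blast
  define Alg where "Alg n = (case g n of (t, k, T, d) \<Rightarrow> alg t k T d)" for n
  have main_res: "valid_run (nat \<lfloor>(1 + \<epsilon>) * real n\<rfloor>) (Alg n) s \<and>
             sort_cost (Alg n) s \<le> 2 powr (7 * sqrt (log 2 (real n) * log 2 (log 2 (real n))))"
    if n: "N \<le> n" and s: "length s = n" "\<forall>x\<in>set s. 0 \<le> x \<and> x \<le> 1" for n s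
  proof -
    obtain t k T d where gn: "g n = (t, k, T, d)" by (cases "g n") auto
    have q: "k \<ge> 1 \<and> T \<ge> 1 \<and> t = T + k + 1 \<and> n \<le> T^d \<and> real (t^d) \<le> (1 + e) * real n \<and>
      2 + (\<Sum>l<d. real t ^ Suc l / real k ^ l) \<le> 2 powr (7 * sqrt (log 2 (real n) * log 2 (log 2 (real n))))"
    proof -
      have "Q n (t, k, T, d)" using g[OF n] unfolding gn .
      then show ?thesis unfolding Q_def prod.case by blast
    qed
    have "real (t^d) \<le> (1 + \<epsilon>) * real n"
    proof -
      have "(1 + e) * real n \<le> (1 + \<epsilon>) * real n" using ee by (intro mult_right_mono) auto
      then show ?thesis using q by linarith
    qed
    then have "int (t^d) \<le> \<lfloor>(1 + \<epsilon>) * real n\<rfloor>" by (simp add: le_floor_iff)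
    then have tm: "t^d \<le> nat \<lfloor>(1 + \<epsilon>) * real n\<rfloor>" by linarith
    have "valid_run (nat \<lfloor>(1 + \<epsilon>) * real n\<rfloor>) (alg t k T d) s \<and> sort_cost (alg t k T d) s \<le> 2 + (\<Sum>l<d. real t ^ Suc l / real k ^ l)"
      using algo_props[of k T t s d "nat \<lfloor>(1 + \<epsilon>) * real n\<rfloor>"] q s tm by auto
    then show ?thesis using q unfolding Alg_def gn by auto
  qed
  show ?thesis
    by (rule exI[of _ 7], simp, rule exI[of _ N], rule exI[of _ Alg]) (use main_res in blast)
qed

end
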